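(* For arbitrarily large values of $|V|$ there exists a partition exchange economy with pairwise exchanges and only $n=3$ organizations whose $\big(\tfrac{|V|}{18}-3\big)$-supplemented core is empty.
   Context: Pairwise partition exchange economy: a set of organizations $N=\{1,\dots,n\}$; pairwise disjoint finite sets $V^1,\dots,V^n$, $V=\bigcup_i V^i$; subsets $U^i\subseteq V^i$ (patient vertices of organization $i$); an undirected (mutual) compatibility graph $\mathcal G=(V,E)$. An exchange among $W\subseteq V$ is a matching of $\mathcal G[W]$. The utility $u_i(M)$ of organization $i$ from a matching $M$ is the number of vertices of $U^i$ covered by $M$. Given a finite set $V^0$ of new vertices (additional altruistic donors, belonging to no organization), $\mathcal G^{+V^0}$ is obtained by adding the vertices of $V^0$, each joined by edges to an arbitrarily chosen set of vertices of $V$; exchanges in $\mathcal G^{+V^0}$ are its matchings. A nonempty coalition $P\subseteq N$ blocks a matching $M$ if there is a matching $M'$ of $\mathcal G[\bigcup_{i\in P}V^i]$ with $u_i(M')>u_i(M)$ for all $i\in P$. $M$ is in the $V^0$-supplemented core if it is a matching of $\mathcal G^{+V^0}$ blocked by no nonempty coalition. The $d$-supplemented core is nonempty if there exist a set $V^0$ with $|V^0|\le d$, a choice of its edges, and a matching in the $V^0$-supplemented core; otherwise it is empty. *)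

theory Defs
  imports Complex_Main
begin

definition all_verts :: "'o set \<Rightarrow> ('o \<Rightarrow> 'a set) \<Rightarrow> 'a set" where
  "all_verts N Vs = (\<Union>i\<in>N. Vs i)"

definition pe_economy :: "'o set \<Rightarrow> ('o \<Rightarrow> 'a set) \<Rightarrow> ('o \<Rightarrow> 'a set) \<Rightarrow> 'a set set \<Rightarrow> bool" where
  "pe_economy N Vs U E \<longleftrightarrow>
     finite N \<and>
     (\<forall>i\<in>N. finite (Vs i)) \<and>
     (\<forall>i\<in>N. \<forall>j\<in>N. i \<noteq> j \<longrightarrow> Vs i \<inter> Vs j = {}) \<and>
     (\<forall>i\<in>N. U i \<subseteq> Vs i) \<and>
     E \<subseteq> {{x, y} | x y. x \<noteq> y \<and> x \<in> all_verts N Vs \<and> y \<in> all_verts N Vs}"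

definition matching :: "'a set set \<Rightarrow> 'a set set \<Rightarrow> bool" where
  "matching E M \<longleftrightarrow> M \<subseteq> E \<and> (\<forall>e\<in>M. \<forall>f\<in>M. e \<noteq> f \<longrightarrow> e \<inter> f = {})"

definition utility :: "('o \<Rightarrow> 'a set) \<Rightarrow> 'o \<Rightarrow> 'a set set \<Rightarrow> nat" where
  "utility U i M = card (U i \<inter> \<Union>M)"

definition blocks :: "'o set \<Rightarrow> ('o \<Rightarrow> 'a set) \<Rightarrow> ('o \<Rightarrow> 'a set) \<Rightarrow> 'a set set \<Rightarrow> 'o set \<Rightarrow> 'a set set \<Rightarrow> bool" where
  "blocks N Vs U E P M \<longleftrightarrow> P \<noteq> {} \<and> P \<subseteq> N \<and>
     (\<exists>M'. matching {e \<in> E. e \<subseteq> all_verts P Vs} M' \<and>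
           (\<forall>i\<in>P. utility U i M' > utility U i M))"

definition in_supp_core :: "'o set \<Rightarrow> ('o \<Rightarrow> 'a set) \<Rightarrow> ('o \<Rightarrow> 'a set) \<Rightarrow> 'a set set \<Rightarrow> 'a set set \<Rightarrow> 'a set set \<Rightarrow> bool" where
  "in_supp_core N Vs U E E0 M \<longleftrightarrow>
     matching (E \<union> E0) M \<and> \<not> (\<exists>P. blocks N Vs U E P M)"

definition supp_core_nonempty :: "'o set \<Rightarrow> ('o \<Rightarrow> 'a set) \<Rightarrow> ('o \<Rightarrow> 'a set) \<Rightarrow> 'a set set \<Rightarrow> real \<Rightarrow> bool" where
  "supp_core_nonempty N Vs U E d \<longleftrightarrow>
     (\<exists>V0 E0 M. finite V0 \<and> real (card V0) \<le> d \<and> V0 \<inter> all_verts N Vs = {} \<and>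
        E0 \<subseteq> {{x, y} | x y. x \<in> V0 \<and> y \<in> all_verts N Vs} \<and>
        in_supp_core N Vs U E E0 M)"

end

theory Submission
  imports Defs
begin

definition VV :: "nat \<Rightarrow> nat \<Rightarrow> nat set" where "VV t i = (\<lambda>x. 4*x+i) ` {..<4*t}"
definition UU :: "nat \<Rightarrow> nat \<Rightarrow> nat set" where "UU t i = (\<lambda>x. 4*x+i) ` {..<3*t}"
definition Tri :: "nat \<Rightarrow> nat set set" where
  "Tri t = {{4*c+i, 4*c+j} | c i j. c < t \<and> i \<in> {1,2,3} \<and> j \<in> {1,2,3} \<and> i \<noteq> j}"
definition DPE :: "nat \<Rightarrow> nat set set" where
  "DPE t = {{4*x+i, 4*y+j} | x y i j. 3*t \<le> x \<and> x < 4*t \<and> t \<le> y \<and> y < 3*t \<and> i \<in> {1,2,3} \<and> j \<in> {1,2,3}}"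
definition EE :: "nat \<Rightarrow> nat set set" where "EE t = Tri t \<union> DPE t"

lemma enc: "4*x + i = 4*y + (j::nat) \<Longrightarrow> i < 4 \<Longrightarrow> j < 4 \<Longrightarrow> x = y \<and> i = j"
  by arith

lemma card_meet_le:
  assumes disj: "\<forall>e\<in>M. \<forall>f\<in>M. e \<noteq> f \<longrightarrow> e \<inter> f = {}" and fin: "finite S"
  shows "finite {e\<in>M. e\<inter>S \<noteq> {}} \<and> card {e\<in>M. e\<inter>S \<noteq> {}} \<le> card S"
proof -
  let ?A = "{e\<in>M. e\<inter>S \<noteq> {}}"
  define g where "g e = (SOME x. x \<in> e \<inter> S)" for e
  have g: "g e \<in> e \<inter> S" if "e \<in> ?A" for e
  proof -
    have "\<exists>x. x \<in> e \<inter> S" using that by blast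
    then show ?thesis unfolding g_def by (rule someI_ex)
  qed
  have inj: "inj_on g ?A"
  proof (rule inj_onI)
    fix e f assume a: "e\<in>?A" "f\<in>?A" "g e = g f"
    then have "g e \<in> e \<inter> f" using g by fastforce
    then show "e = f" using disj a by blast
  qed
  have img: "g ` ?A \<subseteq> S" using g by blast
  have "finite ?A" using inj_on_finite[OF inj img fin] .
  moreover have "card ?A \<le> card S" using card_inj_on_le[OF inj img fin] .
  ultimately show ?thesis by blast
qed

lemma tri_meet:
  assumes "i \<in> {1,2,3}" "j \<in> {1,2,3}" "i' \<in> {1,2,3}" "j' \<in> {1,2,3}" "i \<noteq> j" "i' \<noteq> j'"
  shows "{4*c+i,4*c+j} \<inter> {4*c+i',4*c+(j'::nat)} \<noteq> {}"
  using assms by auto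

lemma tri_card:
  assumes disj: "\<forall>e\<in>M. \<forall>f\<in>M. e \<noteq> f \<longrightarrow> e \<inter> f = {}"
  shows "finite (M \<inter> Tri t) \<and> card (M \<inter> Tri t) \<le> t"
proof -
  let ?A = "M \<inter> Tri t"
  define g where "g e = (SOME x. x \<in> e) div 4" for e :: "nat set"
  have g: "g e < t \<and> (\<exists>i j. i \<in> {1,2,3} \<and> j \<in> {1,2,3} \<and> i \<noteq> j \<and> e = {4*g e+i, 4*g e+j})"
    if a: "e \<in> ?A" for e
  proof -
    obtain c i j where e: "c < t" "i \<in> {1,2,3}" "j \<in> {1,2,3}" "i \<noteq> j" "e = {4*c+i, 4*c+j}"
      using a unfolding Tri_def by blast
    have "\<exists>x. x \<in> e" using e by blast
    then have "(SOME x. x \<in> e) \<in> e" by (rule someI_ex)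
    then have "g e = c" unfolding g_def using e(2,3) unfolding e(5) by auto
    then show ?thesis using e by blast
  qed
  have inj: "inj_on g ?A"
  proof (rule inj_onI)
    fix e f assume a: "e\<in>?A" "f\<in>?A" "g e = g f"
    obtain c where c: "c = g e" by blast
    have ge: "\<exists>i j. i \<in> {1,2,3} \<and> j \<in> {1,2,3} \<and> i \<noteq> j \<and> e = {4*c+i, 4*c+j}"
      using g[OF a(1)] unfolding c by blast
    have gf: "\<exists>i j. i \<in> {1,2,3} \<and> j \<in> {1,2,3} \<and> i \<noteq> j \<and> f = {4*c+i, 4*c+j}"
      using g[OF a(2)] unfolding c a(3) by blast
    obtain i j where ij: "i \<in> {1,2,3}" "j \<in> {1,2,3}" "i \<noteq> j" "e = {4*c+i, 4*c+j}" using ge by blast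
    obtain i' j' where ij': "i' \<in> {1,2,3}" "j' \<in> {1,2,3}" "i' \<noteq> j'" "f = {4*c+i', 4*c+j'}" using gf by blast
    have "{4*c+i,4*c+j} \<inter> {4*c+i',4*c+j'} \<noteq> {}" by (rule tri_meet) fact+
    then have "e \<inter> f \<noteq> {}" using ij(4) ij'(4) by simp
    then show "e = f" using disj a by blast
  qed
  have img: "g ` ?A \<subseteq> {..<t}" using g by blast
  have "finite ?A" using inj_on_finite[OF inj img] by simp
  moreover have "card ?A \<le> t" using card_inj_on_le[OF inj img] by simp
  ultimately show ?thesis by blast
qed

lemma card2: "card {a, b::'a} \<le> 2"
  by (simp add: card_insert_if)

lemma sum_bound:
  fixes t :: nat and M E0 :: "nat set set" and V0 V UA :: "nat set"
  assumes M: "M \<subseteq> EE t \<union> E0"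
    and disj: "\<forall>e\<in>M. \<forall>f\<in>M. e \<noteq> f \<longrightarrow> e \<inter> f = {}"
    and E0: "E0 \<subseteq> {{x, y} | x y. x \<in> V0 \<and> y \<in> V}"
    and V0: "V0 \<inter> V = {}" "finite V0"
    and UV: "UA \<subseteq> V"
    and UA: "UA = UU t 1 \<union> UU t 2 \<union> UU t 3"
  shows "card (UA \<inter> \<Union>M) \<le> 5*t + card V0"
proof -
  define DA where "DA = (\<lambda>(x,i). 4*x+i) ` ({3*t..<4*t} \<times> {1,2,3::nat})"
  have cDA: "card DA \<le> 3*t"
  proof -
    have "card DA \<le> card ({3*t..<4*t} \<times> {1,2,3::nat})" unfolding DA_def by (rule card_image_le) simp
    also have "\<dots> = 3*t" by (simp add: card_cartesian_product)
    finally show ?thesis .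
  qed
  have fDA: "finite DA" unfolding DA_def by simp
  define M1 where "M1 = M \<inter> Tri t"
  define M2 where "M2 = M - Tri t"
  have M1: "finite M1" "card M1 \<le> t" using tri_card[OF disj, of t] unfolding M1_def by auto
  have M2sub: "M2 \<subseteq> {e\<in>M. e \<inter> (DA \<union> V0) \<noteq> {}}" and M2one: "\<forall>e\<in>M2. card (UA \<inter> e) \<le> 1"
  proof -
    have "e \<inter> (DA \<union> V0) \<noteq> {} \<and> card (UA \<inter> e) \<le> 1" if e: "e \<in> M2" for e
    proof -
      have "e \<in> DPE t \<or> e \<in> E0" using e M unfolding M2_def EE_def by blast
      then show ?thesis
      proof
        assume "e \<in> DPE t"
        then obtain x y i j where xy: "3*t \<le> x" "x < 4*t" "t \<le> y" "y < 3*t" "i \<in> {1,2,3}" "j \<in> {1,2,3}"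
           "e = {4*x+i, 4*y+j}" unfolding DPE_def by blast
        have "4*x+i \<in> DA" unfolding DA_def using xy by force
        moreover have "4*x+i \<notin> UA"
        proof
          assume "4*x+i \<in> UA"
          then obtain z k where "z < 3*t" "k \<in> {1,2,3::nat}" "4*x+i = 4*z+k" unfolding UA UU_def by blast
          then show False using enc[of x i z k] xy by auto
        qed
        ultimately have "e \<inter> (DA \<union> V0) \<noteq> {}" "UA \<inter> e \<subseteq> {4*y+j}" using xy(7) by auto
        moreover have "card (UA \<inter> e) \<le> 1"
          using card_mono[OF _ \<open>UA \<inter> e \<subseteq> {4*y+j}\<close>] by simp
        ultimately show ?thesis by blast
      next
        assume "e \<in> E0"
        then obtain x y where xy: "x \<in> V0" "y \<in> V" "e = {x, y}" using E0 by blast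
        have "x \<notin> UA" using xy V0 UV by blast
        then have "e \<inter> (DA \<union> V0) \<noteq> {}" "UA \<inter> e \<subseteq> {y}" using xy by auto
        moreover have "card (UA \<inter> e) \<le> 1"
          using card_mono[OF _ \<open>UA \<inter> e \<subseteq> {y}\<close>] by simp
        ultimately show ?thesis by blast
      qed
    qed
    then show "M2 \<subseteq> {e\<in>M. e \<inter> (DA \<union> V0) \<noteq> {}}" "\<forall>e\<in>M2. card (UA \<inter> e) \<le> 1"
      unfolding M2_def by auto
  qed
  have cm: "finite {e\<in>M. e \<inter> (DA \<union> V0) \<noteq> {}} \<and> card {e\<in>M. e \<inter> (DA \<union> V0) \<noteq> {}} \<le> card (DA \<union> V0)"
    by (rule card_meet_le[OF disj]) (use fDA V0 in simp)
  have fM2: "finite M2" using cm M2sub finite_subset by blast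
  have cM2: "card M2 \<le> 3*t + card V0"
  proof -
    have "card M2 \<le> card (DA \<union> V0)" using cm M2sub card_mono le_trans by blast
    also have "\<dots> \<le> card DA + card V0" by (rule card_Un_le)
    finally show ?thesis using cDA by linarith
  qed
  have fin_e: "finite e" if "e \<in> M" for e
  proof -
    have "e \<in> EE t \<union> E0" using M that by blast
    then show ?thesis unfolding EE_def Tri_def DPE_def using E0 by auto
  qed
  have sub: "UA \<inter> \<Union>M \<subseteq> (\<Union>e\<in>M1. e) \<union> (\<Union>e\<in>M2. UA \<inter> e)"
    unfolding M1_def M2_def by blast
  have "card (UA \<inter> \<Union>M) \<le> card ((\<Union>e\<in>M1. e) \<union> (\<Union>e\<in>M2. UA \<inter> e))"
    by (rule card_mono[OF _ sub]) (use M1 fM2 fin_e in \<open>auto simp: M1_def M2_def\<close>)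
  also have "\<dots> \<le> card (\<Union>e\<in>M1. e) + card (\<Union>e\<in>M2. UA \<inter> e)" by (rule card_Un_le)
  also have "card (\<Union>e\<in>M1. e) \<le> (\<Sum>e\<in>M1. card e)" by (rule card_UN_le[OF M1(1)])
  also have "(\<Sum>e\<in>M1. card e) \<le> card M1 * 2"
  proof -
    have "card e \<le> 2" if "e \<in> M1" for e
    proof -
      obtain c i j where "e = {4*c+i, 4*c+j}" using \<open>e \<in> M1\<close> unfolding M1_def Tri_def by blast
      then show "card e \<le> 2" using card2 by simp
    qed
    then show ?thesis using sum_bounded_above[of M1 card 2] by simp
  qed
  also have "card (\<Union>e\<in>M2. UA \<inter> e) \<le> (\<Sum>e\<in>M2. card (UA \<inter> e))" by (rule card_UN_le[OF fM2])
  also have "(\<Sum>e\<in>M2. card (UA \<inter> e)) \<le> card M2 * 1"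
    using sum_bounded_above[of M2 "\<lambda>e. card (UA \<inter> e)" 1] M2one by simp
  finally show ?thesis using M1(2) cM2 by linarith
qed


lemma dm4: "(r::nat) < 4 \<Longrightarrow> (4*y+r) div 4 = y" by simp
lemma mm4: "(r::nat) < 4 \<Longrightarrow> (4*y+r) mod 4 = r" by simp

lemma vv_in: "x < 4*t \<Longrightarrow> 4*x+i \<in> VV t i"
  unfolding VV_def by (rule imageI) simp
lemma uu_in: "x < 3*t \<Longrightarrow> 4*x+i \<in> UU t i"
  unfolding UU_def by (rule imageI) simp

lemma pair_block:
  assumes ij: "i \<in> {1,2,3}" "j \<in> {1,2,3}" "i \<noteq> j"
    and ab: "a \<le> 3*t" "b \<le> 3*t" "a + b \<le> 4*t"
  shows "\<exists>M'. matching {e\<in>EE t. e \<subseteq> VV t i \<union> VV t j} M' \<and>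
     a \<le> card (UU t i \<inter> \<Union>M') \<and> b \<le> card (UU t j \<inter> \<Union>M')"
proof -
  have i4: "i < 4" "j < 4" "0 < i" "0 < j" using ij by auto
  define \<alpha> where "\<alpha> = a - t"
  have al: "\<alpha> \<le> 2*t" "a \<le> t + \<alpha>" "b \<le> 3*t - \<alpha>" "\<alpha> \<le> 3*t" using ab unfolding \<alpha>_def by auto
  define P where "P m = (if m < \<alpha> then 4*(t+m)+i else 4*(t+m-\<alpha>)+j)" for m
  define ed where "ed k = (if k < t then {4*k+i, 4*k+j} else if k < 2*t then {4*(2*t+k)+i, P (k-t)}
     else {4*(t+k)+j, P (k-t)})" for k
  define h where "h v = (if v div 4 < t then v div 4 else if 3*t \<le> v div 4 then
     (if v mod 4 = i then v div 4 - 2*t else v div 4 - t) else (if v mod 4 = i then v div 4 else v div 4 + \<alpha>))" for v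
  have hform: "h (4*y+r) = (if y < t then y else if 3*t \<le> y then
     (if r = i then y - 2*t else y - t) else (if r = i then y else y + \<alpha>))" if "r < 4" for y r
    using that by (simp only: h_def dm4[OF that] mm4[OF that])
  have hP: "h (P m) = t + m" if "m < 2*t" for m
  proof (cases "m < \<alpha>")
    case True
    then have pm: "P m = 4*(t+m)+i" by (simp add: P_def)
    show ?thesis unfolding pm hform[OF i4(1)] using that by simp
  next
    case False
    then have pm: "P m = 4*(t+m-\<alpha>)+j" by (simp add: P_def)
    show ?thesis unfolding pm hform[OF i4(2)] using that ij False al by auto
  qed
  have hed: "h v = k" if "k < 3*t" "v \<in> ed k" for k v
  proof -
    consider "k < t" | "t \<le> k" "k < 2*t" | "2*t \<le> k" by linarith
    then show ?thesis
    proof cases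
      case 1
      then have "v = 4*k+i \<or> v = 4*k+j" using that unfolding ed_def by auto
      then show ?thesis using hform[OF i4(1), of k] hform[OF i4(2), of k] 1 by auto
    next
      case 2
      then have "v = 4*(2*t+k)+i \<or> v = P (k-t)" using that unfolding ed_def by auto
      then show ?thesis using hP[of "k-t"] 2 hform[OF i4(1), of "2*t+k"] by auto
    next
      case 3
      then have "v = 4*(t+k)+j \<or> v = P (k-t)" using that unfolding ed_def by auto
      then show ?thesis using hP[of "k-t"] 3 that ij hform[OF i4(2), of "t+k"] by auto
    qed
  qed
  define M' where "M' = ed ` {..<3*t}"
  have Pin: "P (k - t) \<in> ed k" if "t \<le> k" for k
    unfolding ed_def using that by auto
  have Prange: "\<exists>y r. P m = 4*y+r \<and> t \<le> y \<and> y < 3*t \<and> r \<in> {i,j}" if "m < 2*t" for m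
  proof (cases "m < \<alpha>")
    case True
    then have "P m = 4*(t+m)+i \<and> t \<le> t+m \<and> t+m < 3*t \<and> i \<in> {i,j}" using that by (simp add: P_def)
    then show ?thesis by blast
  next
    case False
    then have "P m = 4*(t+m-\<alpha>)+j \<and> t \<le> t+m-\<alpha> \<and> t+m-\<alpha> < 3*t \<and> j \<in> {i,j}" using that al False by (auto simp: P_def)
    then show ?thesis by blast
  qed
  have edE: "ed k \<in> EE t \<and> ed k \<subseteq> VV t i \<union> VV t j" if kk: "k < 3*t" for k
  proof (cases "k < t")
    case True
    then have "ed k \<in> Tri t" unfolding ed_def Tri_def using ij by auto
    moreover have "ed k \<subseteq> VV t i \<union> VV t j" unfolding ed_def using True vv_in[of k t i] vv_in[of k t j] by auto
    ultimately show ?thesis unfolding EE_def by blast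
  next
    case False
    have "k - t < 2*t" using kk by arith
    then obtain y r where yo: "P (k-t) = 4*y+r" "t \<le> y" "y < 3*t" "r \<in> {i,j}" using Prange by blast
    have oo: "r \<in> {1,2,3}" using yo ij by auto
    show ?thesis
    proof (cases "k < 2*t")
      case True
      then have e: "ed k = {4*(2*t+k)+i, 4*y+r}" unfolding ed_def using False yo by simp
      have "3*t \<le> 2*t+k \<and> 2*t+k < 4*t \<and> t \<le> y \<and> y < 3*t \<and> i \<in> {1,2,3} \<and> r \<in> {1,2,3}"
        using False True yo oo ij by auto
      then have "ed k \<in> DPE t" unfolding e DPE_def by blast
      moreover have "ed k \<subseteq> VV t i \<union> VV t j" unfolding e using True yo vv_in[of "2*t+k" t i] vv_in[of y t r] by auto
      ultimately show ?thesis unfolding EE_def by blast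
    next
      case F2: False
      then have e: "ed k = {4*(t+k)+j, 4*y+r}" unfolding ed_def using False yo by simp
      have "3*t \<le> t+k \<and> t+k < 4*t \<and> t \<le> y \<and> y < 3*t \<and> j \<in> {1,2,3} \<and> r \<in> {1,2,3}"
        using False F2 kk yo oo ij by auto
      then have "ed k \<in> DPE t" unfolding e DPE_def by blast
      moreover have "ed k \<subseteq> VV t i \<union> VV t j" unfolding e using kk yo vv_in[of "t+k" t j] vv_in[of y t r] by auto
      ultimately show ?thesis unfolding EE_def by blast
    qed
  qed
  have match: "matching {e\<in>EE t. e \<subseteq> VV t i \<union> VV t j} M'"
    unfolding matching_def
  proof (intro conjI ballI impI)
    show "M' \<subseteq> {e \<in> EE t. e \<subseteq> VV t i \<union> VV t j}" unfolding M'_def using edE by auto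
  next
    fix e f assume a: "e \<in> M'" "f \<in> M'" "e \<noteq> f"
    obtain k where k: "k < 3*t" "e = ed k" using a unfolding M'_def by auto
    obtain k' where k': "k' < 3*t" "f = ed k'" using a unfolding M'_def by auto
    show "e \<inter> f = {}"
    proof (rule ccontr)
      assume "e \<inter> f \<noteq> {}"
      then obtain v where "v \<in> ed k" "v \<in> ed k'" using k k' by blast
      then have "k = k'" using hed k k' by metis
      then show False using a k k' by simp
    qed
  qed
  have ui: "(\<lambda>c. 4*c+i) ` {..<t+\<alpha>} \<subseteq> UU t i \<inter> \<Union>M'"
  proof
    fix v assume "v \<in> (\<lambda>c. 4*c+i) ` {..<t+\<alpha>}"
    then obtain c where c: "c < t+\<alpha>" "v = 4*c+i" by auto
    have "v \<in> UU t i" unfolding c using c al uu_in[of c t i] by auto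
    moreover have "v \<in> \<Union>M'"
    proof (cases "c < t")
      case True
      then have "v \<in> ed c" unfolding ed_def c by simp
      then show ?thesis unfolding M'_def using True by auto
    next
      case False
      have "v = P ((c - t + t) - t)" unfolding P_def c using False c by auto
      then have "v \<in> ed (c - t + t)" using Pin[of "c-t+t"] by simp
      then show ?thesis unfolding M'_def using False c al by auto
    qed
    ultimately show "v \<in> UU t i \<inter> \<Union>M'" by blast
  qed
  have uj: "(\<lambda>c. 4*c+j) ` {..<3*t-\<alpha>} \<subseteq> UU t j \<inter> \<Union>M'"
  proof
    fix v assume "v \<in> (\<lambda>c. 4*c+j) ` {..<3*t-\<alpha>}"
    then obtain c where c: "c < 3*t-\<alpha>" "v = 4*c+j" by auto
    have "v \<in> UU t j" unfolding c using c al uu_in[of c t j] by auto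
    moreover have "v \<in> \<Union>M'"
    proof (cases "c < t")
      case True
      then have "v \<in> ed c" unfolding ed_def c by simp
      then show ?thesis unfolding M'_def using True by auto
    next
      case False
      have "v = P ((c - t + \<alpha> + t) - t)" unfolding P_def c using False c by auto
      then have "v \<in> ed (c - t + \<alpha> + t)" using Pin[of "c - t + \<alpha> + t"] by simp
      then show ?thesis unfolding M'_def using False c al by auto
    qed
    ultimately show "v \<in> UU t j \<inter> \<Union>M'" by blast
  qed
  have fU: "finite (UU t i \<inter> \<Union>M')" "finite (UU t j \<inter> \<Union>M')" unfolding UU_def by auto
  have "card ((\<lambda>c. 4*c+i) ` {..<t+\<alpha>}) = t + \<alpha>" by (subst card_image) (auto simp: inj_on_def)
  then have ci: "t + \<alpha> \<le> card (UU t i \<inter> \<Union>M')" using card_mono[OF fU(1) ui] by simp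
  have "card ((\<lambda>c. 4*c+j) ` {..<3*t-\<alpha>}) = 3*t-\<alpha>" by (subst card_image) (auto simp: inj_on_def)
  then have cj: "3*t-\<alpha> \<le> card (UU t j \<inter> \<Union>M')" using card_mono[OF fU(2) uj] by simp
  show ?thesis using match ci cj al by (intro exI[of _ M']) auto
qed


lemma allv: "all_verts {1,2,3} (VV t) = VV t 1 \<union> VV t 2 \<union> VV t 3"
  unfolding all_verts_def by auto

lemma allv2: "all_verts {i,j} (VV t) = VV t i \<union> VV t j"
  unfolding all_verts_def by auto

lemma VV_disj: "i < 4 \<Longrightarrow> j < 4 \<Longrightarrow> i \<noteq> j \<Longrightarrow> VV t i \<inter> VV t j = {}"
  unfolding VV_def using enc by blast

lemma UU_VV: "UU t i \<subseteq> VV t i"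
  unfolding UU_def VV_def by (rule image_mono) auto

lemma cardVV: "card (VV t i) = 4*t"
  unfolding VV_def by (subst card_image) (auto simp: inj_on_def)

lemma finVV: "finite (VV t i)" unfolding VV_def by simp

lemma block_pair:
  assumes ij: "i \<in> {1,2,3}" "j \<in> {1,2,3}" "i \<noteq> j"
    and ab: "card (UU t i \<inter> \<Union>M) + 1 \<le> 3*t" "card (UU t j \<inter> \<Union>M) + 1 \<le> 3*t"
      "card (UU t i \<inter> \<Union>M) + card (UU t j \<inter> \<Union>M) + 2 \<le> 4*t"
  shows "blocks {1,2,3} (VV t) (UU t) (EE t) {i,j} M"
proof -
  obtain M' where M': "matching {e\<in>EE t. e \<subseteq> VV t i \<union> VV t j} M'"
    "card (UU t i \<inter> \<Union>M) + 1 \<le> card (UU t i \<inter> \<Union>M')"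
    "card (UU t j \<inter> \<Union>M) + 1 \<le> card (UU t j \<inter> \<Union>M')"
    using pair_block[OF ij, of "card (UU t i \<inter> \<Union>M) + 1" t "card (UU t j \<inter> \<Union>M) + 1"] ab by auto
  show ?thesis unfolding blocks_def allv2 utility_def
    using M' ij by (intro conjI exI[of _ M']) auto
qed

theorem mainTheorem2:
  shows "\<forall>m::nat. \<exists>(Vs :: nat \<Rightarrow> nat set) (U :: nat \<Rightarrow> nat set) (E :: nat set set).
     pe_economy {1, 2, 3} Vs U E \<and>
     card (all_verts {1, 2, 3} Vs) \<ge> m \<and>
     \<not> supp_core_nonempty {1, 2, 3} Vs U E (real (card (all_verts {1, 2, 3} Vs)) / 18 - 3)"
proof
  fix m :: nat
  define t where "t = m + 1"
  define V where "V = all_verts {1,2,3} (VV t)"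
  have V: "V = VV t 1 \<union> VV t 2 \<union> VV t 3" unfolding V_def allv ..
  have cardV: "card V \<le> 12*t"
  proof -
    have "card V \<le> card (VV t 1 \<union> VV t 2) + card (VV t 3)" unfolding V by (rule card_Un_le)
    also have "\<dots> \<le> card (VV t 1) + card (VV t 2) + card (VV t 3)" using card_Un_le by simp
    finally show ?thesis unfolding cardVV by simp
  qed
  have cardV2: "m \<le> card V"
  proof -
    have "card (VV t 1) \<le> card V" unfolding V by (rule card_mono) (auto simp: finVV)
    then show ?thesis unfolding cardVV t_def by simp
  qed
  have pe: "pe_economy {1,2,3} (VV t) (UU t) (EE t)"
    unfolding pe_economy_def
  proof (intro conjI)
    show "finite {1,2,3::nat}" by simp
    show "\<forall>i\<in>{1,2,3}. finite (VV t i)" by (simp add: finVV)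
    show "\<forall>i\<in>{1,2,3}. \<forall>j\<in>{1,2,3}. i \<noteq> j \<longrightarrow> VV t i \<inter> VV t j = {}"
      using VV_disj by auto
    show "\<forall>i\<in>{1,2,3}. UU t i \<subseteq> VV t i" using UU_VV by auto
    show "EE t \<subseteq> {{x, y} |x y. x \<noteq> y \<and> x \<in> all_verts {1, 2, 3} (VV t) \<and> y \<in> all_verts {1, 2, 3} (VV t)}"
    proof
      fix e assume "e \<in> EE t"
      then have "e \<in> Tri t \<or> e \<in> DPE t" unfolding EE_def by blast
      then show "e \<in> {{x, y} |x y. x \<noteq> y \<and> x \<in> all_verts {1, 2, 3} (VV t) \<and> y \<in> all_verts {1, 2, 3} (VV t)}"
      proof
        assume "e \<in> Tri t"
        then obtain c i j where cij: "c < t" "i \<in> {1,2,3}" "j \<in> {1,2,3}" "i \<noteq> j" "e = {4*c+i, 4*c+j}"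
          unfolding Tri_def by blast
        have "4*c+i \<noteq> 4*c+j" "4*c+i \<in> all_verts {1, 2, 3} (VV t)" "4*c+j \<in> all_verts {1, 2, 3} (VV t)"
          using cij vv_in[of c t i] vv_in[of c t j] unfolding allv by auto
        then show ?thesis using cij(5) by blast
      next
        assume "e \<in> DPE t"
        then obtain x y i j where xy: "3*t \<le> x" "x < 4*t" "t \<le> y" "y < 3*t" "i \<in> {1,2,3}" "j \<in> {1,2,3}"
           "e = {4*x+i, 4*y+j}" unfolding DPE_def by blast
        have "4*x+i \<noteq> 4*y+j" using enc[of x i y j] xy by auto
        moreover have "4*x+i \<in> all_verts {1, 2, 3} (VV t)" "4*y+j \<in> all_verts {1, 2, 3} (VV t)"
          using xy vv_in[of x t i] vv_in[of y t j] unfolding allv by auto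
        ultimately show ?thesis using xy(7) by blast
      qed
    qed
  qed
  have nc: "\<not> supp_core_nonempty {1,2,3} (VV t) (UU t) (EE t) (real (card V) / 18 - 3)"
  proof
    assume "supp_core_nonempty {1,2,3} (VV t) (UU t) (EE t) (real (card V) / 18 - 3)"
    then obtain V0 E0 M where fV0: "finite V0" and cV0: "real (card V0) \<le> real (card V) / 18 - 3"
      and dV0: "V0 \<inter> V = {}" and E0: "E0 \<subseteq> {{x, y} | x y. x \<in> V0 \<and> y \<in> V}"
      and core: "in_supp_core {1,2,3} (VV t) (UU t) (EE t) E0 M"
      unfolding supp_core_nonempty_def V_def by blast
    have Mm: "M \<subseteq> EE t \<union> E0" "\<forall>e\<in>M. \<forall>f\<in>M. e \<noteq> f \<longrightarrow> e \<inter> f = {}"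
      and nb: "\<not> (\<exists>P. blocks {1,2,3} (VV t) (UU t) (EE t) P M)"
      using core unfolding in_supp_core_def matching_def by auto
    define UA where "UA = UU t 1 \<union> UU t 2 \<union> UU t 3"
    have UAV: "UA \<subseteq> V" unfolding UA_def V using UU_VV by blast
    have sb: "card (UA \<inter> \<Union>M) \<le> 5*t + card V0"
      by (rule sum_bound[OF Mm E0 dV0 fV0 UAV UA_def])
    define u1 where "u1 = card (UU t 1 \<inter> \<Union>M)"
    define u2 where "u2 = card (UU t 2 \<inter> \<Union>M)"
    define u3 where "u3 = card (UU t 3 \<inter> \<Union>M)"
    have fU: "finite (UU t k \<inter> \<Union>M)" for k unfolding UU_def by simp
    have dU: "(UU t i \<inter> \<Union>M) \<inter> (UU t j \<inter> \<Union>M) = {}" if "i < 4" "j < 4" "i \<noteq> j" for i j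
      using VV_disj[OF that, of t] UU_VV[of t i] UU_VV[of t j] by blast
    have eqUA: "UA \<inter> \<Union>M = ((UU t 1 \<inter> \<Union>M) \<union> (UU t 2 \<inter> \<Union>M)) \<union> (UU t 3 \<inter> \<Union>M)"
      unfolding UA_def by blast
    have "card (UA \<inter> \<Union>M) = u1 + u2 + u3"
      unfolding eqUA u1_def u2_def u3_def
      using dU[of 1 2] dU[of 1 3] dU[of 2 3] fU
      by (subst card_Un_disjoint; (auto simp: card_Un_disjoint)?)
    then have S: "u1 + u2 + u3 \<le> 5*t + card V0" using sb by simp
    have "real (18 * card V0 + 54) \<le> real (12*t)" using cV0 cardV
      by (simp add: of_nat_le_iff[symmetric]) 
    then have c18: "18 * card V0 + 54 \<le> 12*t" by (simp only: of_nat_le_iff)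
    have "(u1+1 \<le> 3*t \<and> u2+1 \<le> 3*t \<and> u1+u2+2 \<le> 4*t) \<or> (u1+1 \<le> 3*t \<and> u3+1 \<le> 3*t \<and> u1+u3+2 \<le> 4*t)
        \<or> (u2+1 \<le> 3*t \<and> u3+1 \<le> 3*t \<and> u2+u3+2 \<le> 4*t)"
    proof -
      have "u1 \<le> u3 \<and> u2 \<le> u3 \<or> u1 \<le> u2 \<and> u3 \<le> u2 \<or> u2 \<le> u1 \<and> u3 \<le> u1" by linarith
      then show ?thesis
      proof (elim disjE)
        assume "u1 \<le> u3 \<and> u2 \<le> u3"
        then have "u1+1 \<le> 3*t \<and> u2+1 \<le> 3*t \<and> u1+u2+2 \<le> 4*t" using S c18 by linarith
        then show ?thesis by blast
      next
        assume "u1 \<le> u2 \<and> u3 \<le> u2"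
        then have "u1+1 \<le> 3*t \<and> u3+1 \<le> 3*t \<and> u1+u3+2 \<le> 4*t" using S c18 by linarith
        then show ?thesis by blast
      next
        assume "u2 \<le> u1 \<and> u3 \<le> u1"
        then have "u2+1 \<le> 3*t \<and> u3+1 \<le> 3*t \<and> u2+u3+2 \<le> 4*t" using S c18 by linarith
        then show ?thesis by blast
      qed
    qed
    then obtain i j where "blocks {1,2,3} (VV t) (UU t) (EE t) {i,j} M"
      using block_pair[of 1 2 t M] block_pair[of 1 3 t M] block_pair[of 2 3 t M]
      unfolding u1_def u2_def u3_def by auto
    then show False using nb by blast
  qed
  show "\<exists>(Vs :: nat \<Rightarrow> nat set) (U :: nat \<Rightarrow> nat set) (E :: nat set set).
     pe_economy {1, 2, 3} Vs U E \<and>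
     card (all_verts {1, 2, 3} Vs) \<ge> m \<and>
     \<not> supp_core_nonempty {1, 2, 3} Vs U E (real (card (all_verts {1, 2, 3} Vs)) / 18 - 3)"
    using pe cardV2 nc unfolding V_def by blast
qed

end
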